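(* Let $n\ge 1$, let $X=\{x_1,\dots,x_n\}$ and $Z=\{z_1,\dots,z_n\}$ be sets of $n$ points equipped with symmetric non-negative functions $d_X\colon X\times X\to\mathbb{R}^+$ and $d_Z\colon Z\times Z\to\mathbb{R}^+$, and let $f_\bullet\colon X\to Z$ be the bijection $f_\bullet(x_i)=z_i$. Fix $\varepsilon>0$ and suppose that $|d_X(x,y)-d_Z(f_\bullet(x),f_\bullet(y))|<\varepsilon$ for all $x,y\in X$. Then, for every positive integer $q$, \[ d^q_{f_0}(B(X),B(Z))\le (n-1)^{1/q}\cdot\varepsilon . \]
   Context: $\mathbb{R}^+=[0,\infty)$. For a finite set $Y=\{y_1,\dots,y_n\}$ with a symmetric non-negative function $d_Y\colon Y\times Y\to\mathbb{R}^+$ (distinct points may have value $0$, and the triangle inequality need not hold): the Vietoris–Rips graph $\mathrm{VR}_0(Y)$ has vertex set $Y$ and no edges, and for $r>0$, $\mathrm{VR}_r(Y)$ has vertex set $Y$ and an edge $[y,y']$ ($y\neq y'$) whenever $d_Y(y,y')\le r$. Let $G_r(Y)$, for $r\ge 0$, denote the graph on $Y$ with an edge $[y,y']$ ($y\ne y'$) whenever $d_Y(y,y')\le r$. $H_0(\mathrm{VR}_r(Y))$ is the $\mathbb{Z}_2$-vector space freely generated by the connected components of $\mathrm{VR}_r(Y)$; $[y]$ denotes the class of $y$. For $b\ge 0$ let $\ker^+_b(Y)\subseteq H_0(\mathrm{VR}_0(Y))$ be the span of all $[y]+[y']$ with $y,y'$ in the same connected component of $G_b(Y)$; let $\ker^-_0(Y)=0$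 and, for $b>0$, $\ker^-_b(Y)$ be the span of all $[y]+[y']$ with $y,y'$ in the same connected component of $G_r(Y)$ for some $0\le r<b$. For $j\in\{2,\dots,n\}$, the death value $b_j$ of $y_j$ is the least $r\ge 0$ such that $y_j$ lies in the same connected component of $G_r(Y)$ as some $y_i$ with $i<j$ ($y_1$ never dies). For $a\ge 0$, $m^Y(a)$ is the number of $j\in\{2,\dots,n\}$ with $b_j=a$; the barcode $B(Y)$ is the multiset of death values with these multiplicities. Given $X,Z,f_\bullet$ as in the claim, $f_0\colon H_0(\mathrm{VR}_0(X))\to H_0(\mathrm{VR}_0(Z))$ is the linear isomorphism $[x_i]\mapsto[z_i]$, and the induced block function is, for $a,b\in\mathbb{R}^+$, \[ \mathcal{M}^0_f(a,b)=\dim\frac{f_0(\ker^+_a(X))\cap\ker^+_b(Z)}{f_0(\ker^-_a(X))\cap\ker^+_b(Z)+f_0(\ker^+_a(X))\cap\ker^-_b(Z)}. \] The induced matching distance is $d^q_{f_0}(B(X),B(Z))=\big(\sum_{a,b\in\mathbb{R}^+}\mathcal{M}^0_f(a,b)\,|a-b|^q\big)^{1/q}$ (only finitely many terms are nonzero). *)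

theory Defs
  imports Complex_Main
begin

text \<open>Points of a finite set Y = {y_0,...,y_(n-1)} are represented by their indices
  0..<n; a "distance" is a function d :: nat => nat => real (only values on indices < n matter).
  H_0(VR_0(Y)) over Z_2 is represented as the finite subsets of {0..<n}
  (a subset = sum of the classes [y_i] of its elements), with addition = symmetric difference.\<close>

definition z2add :: "nat set \<Rightarrow> nat set \<Rightarrow> nat set" where
  "z2add A B = (A - B) \<union> (B - A)"

inductive_set z2span :: "nat set set \<Rightarrow> nat set set" for S where
  zero: "{} \<in> z2span S"
| add: "s \<in> S \<Longrightarrow> v \<in> z2span S \<Longrightarrow> z2add s v \<in> z2span S"

definition z2dim :: "nat set set \<Rightarrow> nat" where
  "z2dim V = (THE k. card V = 2 ^ k)"

definition z2sum :: "nat set set \<Rightarrow> nat set set \<Rightarrow> nat set set" where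
  "z2sum A B = {z2add a b | a b. a \<in> A \<and> b \<in> B}"

definition z2quotdim :: "nat set set \<Rightarrow> nat set set \<Rightarrow> nat" where
  "z2quotdim A W = z2dim A - z2dim W"

definition Gedge :: "(nat \<Rightarrow> nat \<Rightarrow> real) \<Rightarrow> nat \<Rightarrow> real \<Rightarrow> nat \<Rightarrow> nat \<Rightarrow> bool" where
  "Gedge d n r i j \<longleftrightarrow> i < n \<and> j < n \<and> i \<noteq> j \<and> d i j \<le> r"

definition Gconn :: "(nat \<Rightarrow> nat \<Rightarrow> real) \<Rightarrow> nat \<Rightarrow> real \<Rightarrow> nat \<Rightarrow> nat \<Rightarrow> bool" where
  "Gconn d n r i j \<longleftrightarrow> i < n \<and> j < n \<and> (Gedge d n r)\<^sup>*\<^sup>* i j"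

definition ker_plus :: "(nat \<Rightarrow> nat \<Rightarrow> real) \<Rightarrow> nat \<Rightarrow> real \<Rightarrow> nat set set" where
  "ker_plus d n b = z2span {z2add {i} {j} | i j. Gconn d n b i j}"

definition ker_minus :: "(nat \<Rightarrow> nat \<Rightarrow> real) \<Rightarrow> nat \<Rightarrow> real \<Rightarrow> nat set set" where
  "ker_minus d n b = (if b = 0 then {{}} else
     z2span {z2add {i} {j} | i j. \<exists>r. 0 \<le> r \<and> r < b \<and> Gconn d n r i j})"

text \<open>Induced block function; f_0 maps [x_i] to [z_i], i.e. it is the identity on index sets.\<close>
definition block_fun ::
  "(nat \<Rightarrow> nat \<Rightarrow> real) \<Rightarrow> (nat \<Rightarrow> nat \<Rightarrow> real) \<Rightarrow> nat \<Rightarrow> real \<Rightarrow> real \<Rightarrow> nat" where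
  "block_fun dX dZ n a b =
     z2quotdim (ker_plus dX n a \<inter> ker_plus dZ n b)
       (z2sum (ker_minus dX n a \<inter> ker_plus dZ n b) (ker_plus dX n a \<inter> ker_minus dZ n b))"

definition induced_matching_dist ::
  "nat \<Rightarrow> (nat \<Rightarrow> nat \<Rightarrow> real) \<Rightarrow> (nat \<Rightarrow> nat \<Rightarrow> real) \<Rightarrow> nat \<Rightarrow> real" where
  "induced_matching_dist q dX dZ n =
     (\<Sum>(a, b) \<in> {(a, b). 0 \<le> a \<and> 0 \<le> b \<and> block_fun dX dZ n a b \<noteq> 0}.
        real (block_fun dX dZ n a b) * \<bar>a - b\<bar> ^ q) powr (1 / real q)"

end

theory Submission
  imports Defs
begin


definition subsp :: "nat set set \<Rightarrow> bool" where
  "subsp V \<longleftrightarrow> {} \<in> V \<and> (\<forall>u\<in>V. \<forall>v\<in>V. z2add u v \<in> V)"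

lemma z2add_assoc: "z2add (z2add a b) c = z2add a (z2add b c)"
  unfolding z2add_def by blast
lemma z2add_comm: "z2add a b = z2add b a"
  unfolding z2add_def by blast
lemma z2add_left_comm: "z2add a (z2add b c) = z2add b (z2add a c)"
  unfolding z2add_def by blast
lemma z2add_empty[simp]: "z2add {} a = a" "z2add a {} = a"
  unfolding z2add_def by blast+
lemma z2add_self[simp]: "z2add a a = {}"
  unfolding z2add_def by blast
lemma z2add_cancel[simp]: "z2add a (z2add a b) = b"
  unfolding z2add_def by blast

lemma span_closed: "u \<in> z2span S \<Longrightarrow> v \<in> z2span S \<Longrightarrow> z2add u v \<in> z2span S"
  by (induction u rule: z2span.induct) (auto simp: z2add_assoc intro: z2span.add)

lemma span_subsp: "subsp (z2span S)"
  unfolding subsp_def using span_closed z2span.zero by blast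

lemma span_incl: "s \<in> S \<Longrightarrow> s \<in> z2span S"
  using z2span.add[OF _ z2span.zero, of s S] by simp

lemma span_least: "S \<subseteq> V \<Longrightarrow> subsp V \<Longrightarrow> z2span S \<subseteq> V"
proof
  fix x assume a: "S \<subseteq> V" "subsp V" and "x \<in> z2span S"
  from this(3) show "x \<in> V" by (induction x rule: z2span.induct) (use a in \<open>auto simp: subsp_def\<close>)
qed

lemma span_mono: "S \<subseteq> T \<Longrightarrow> z2span S \<subseteq> z2span T"
  by (meson span_incl span_least span_subsp subset_iff)

lemma span_of_subsp: "subsp V \<Longrightarrow> z2span V = V"
  by (simp add: span_incl span_least subset_antisym subsetI)

lemma span_insert: "z2span (insert s S) = z2span S \<union> z2add s ` z2span S"
proof
  show "z2span (insert s S) \<subseteq> z2span S \<union> z2add s ` z2span S"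
  proof
    fix x assume "x \<in> z2span (insert s S)"
    then show "x \<in> z2span S \<union> z2add s ` z2span S"
    proof (induction x rule: z2span.induct)
      case zero
      then show ?case using z2span.zero by blast
    next
      case (add t v)
      from add.IH show ?case
      proof
        assume v: "v \<in> z2span S"
        show ?thesis
        proof (cases "t = s")
          case True then show ?thesis using v by blast
        next
          case False then have "t \<in> S" using add.hyps by blast
          then show ?thesis using v span_closed span_incl by blast
        qed
      next
        assume "v \<in> z2add s ` z2span S"
        then obtain w where w: "w \<in> z2span S" "v = z2add s w" by blast
        show ?thesis
        proof (cases "t = s")
          case True then show ?thesis using w by simp
        next
          case False then have "t \<in> S" using add.hyps by blast
          then have "z2add t w \<in> z2span S" using w span_closed span_incl by blast
          then show ?thesis using w by (simp add: z2add_left_comm)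
        qed
      qed
    qed
  qed
next
  have "z2span S \<subseteq> z2span (insert s S)" by (rule span_mono) blast
  moreover have "s \<in> z2span (insert s S)" by (rule span_incl) blast
  ultimately show "z2span S \<union> z2add s ` z2span S \<subseteq> z2span (insert s S)"
    using span_closed by blast
qed

lemma span_empty: "z2span {} = {{}}"
proof -
  have "z2span {} \<subseteq> {{}}"
  proof
    fix x assume "x \<in> z2span {}" then show "x \<in> {{}}"
      by (induction x rule: z2span.induct) auto
  qed
  then show ?thesis using z2span.zero by blast
qed

lemma span_card: "finite S \<Longrightarrow> finite (z2span S) \<and> (\<exists>k. card (z2span S) = 2 ^ k)"
proof (induction S rule: finite_induct)
  case empty
  then show ?case by (simp add: span_empty) (rule exI[of _ 0], simp)
next
  case (insert s S)
  from insert.IH obtain k where fin: "finite (z2span S)" and k: "card (z2span S) = 2 ^ k" by blast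
  show ?case
  proof (cases "s \<in> z2span S")
    case True
    then have "z2add s ` z2span S \<subseteq> z2span S" using span_closed by blast
    then have "z2span (insert s S) = z2span S" by (simp only: span_insert) (rule Un_absorb2)
    then show ?thesis using fin k by auto
  next
    case False
    have disj: "z2span S \<inter> z2add s ` z2span S = {}"
    proof (rule ccontr)
      assume "z2span S \<inter> z2add s ` z2span S \<noteq> {}"
      then obtain v w where "v \<in> z2span S" "w \<in> z2span S" "v = z2add s w" by blast
      then have "z2add v w = s" by (simp add: z2add_assoc)
      then show False using False span_closed \<open>v \<in> z2span S\<close> \<open>w \<in> z2span S\<close> by metis
    qed
    have inj: "inj_on (z2add s) (z2span S)"
      by (metis inj_onI z2add_cancel)
    have "card (z2span (insert s S)) = card (z2span S) + card (z2add s ` z2span S)"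
      unfolding span_insert using disj fin by (simp add: card_Un_disjoint)
    also have "\<dots> = 2 ^ Suc k" using card_image[OF inj] k by simp
    finally have "card (z2span (insert s S)) = 2 ^ Suc k" .
    moreover have "finite (z2span (insert s S))" unfolding span_insert using fin by simp
    ultimately show ?thesis by blast
  qed
qed

lemma subsp_card: "subsp V \<Longrightarrow> finite V \<Longrightarrow> \<exists>k. card V = 2 ^ k"
  using span_card span_of_subsp by metis

lemma D_eq: "card V = 2 ^ k \<Longrightarrow> z2dim V = k"
  unfolding z2dim_def by (rule the_equality) auto

lemma D_card: "subsp V \<Longrightarrow> finite V \<Longrightarrow> card V = 2 ^ z2dim V"
  using subsp_card D_eq by metis

lemma D_mono: "subsp U \<Longrightarrow> subsp V \<Longrightarrow> U \<subseteq> V \<Longrightarrow> finite V \<Longrightarrow> z2dim U \<le> z2dim V"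
proof -
  assume a: "subsp U" "subsp V" "U \<subseteq> V" "finite V"
  then have "card U \<le> card V" by (simp add: card_mono)
  then have "(2::nat) ^ z2dim U \<le> 2 ^ z2dim V" using a D_card finite_subset by metis
  then show ?thesis by simp
qed

lemma subsp_int: "subsp U \<Longrightarrow> subsp V \<Longrightarrow> subsp (U \<inter> V)"
  unfolding subsp_def by blast

lemma subsp_sum: "subsp H \<Longrightarrow> subsp K \<Longrightarrow> subsp (z2sum H K)"
  unfolding subsp_def z2sum_def
  apply safe
   apply (metis z2add_empty(1))
  apply (rule_tac x="z2add a aa" in exI, rule_tac x="z2add b ba" in exI)
  apply (simp add: z2add_assoc z2add_left_comm)
  done

lemma sum_left: "{} \<in> K \<Longrightarrow> H \<subseteq> z2sum H K"
  unfolding z2sum_def by force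
lemma sum_right: "{} \<in> H \<Longrightarrow> K \<subseteq> z2sum H K"
  unfolding z2sum_def by force
lemma sum_least: "H \<subseteq> V \<Longrightarrow> K \<subseteq> V \<Longrightarrow> subsp V \<Longrightarrow> z2sum H K \<subseteq> V"
  unfolding z2sum_def subsp_def by blast

lemma sum_finite: "finite H \<Longrightarrow> finite K \<Longrightarrow> finite (z2sum H K)"
proof -
  assume "finite H" "finite K"
  moreover have "z2sum H K = (\<lambda>(h,k). z2add h k) ` (H \<times> K)"
    unfolding z2sum_def by auto
  ultimately show ?thesis by simp
qed

lemma z2_eq_swap: "z2add a b = z2add c d \<Longrightarrow> z2add c a = z2add d b"
  unfolding z2add_def by (auto simp: set_eq_iff)

lemma z2_shift: "z2add (z2add h0 t) (z2add k0 t) = z2add h0 k0"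
  by (metis z2add_assoc z2add_comm z2add_cancel)

lemma product_formula:
  assumes H: "subsp H" "finite H" and K: "subsp K" "finite K"
  shows "card (z2sum H K) * card (H \<inter> K) = card H * card K"
proof -
  define f where "f = (\<lambda>(h,k). z2add h k)"
  have T: "z2sum H K = f ` (H \<times> K)" unfolding z2sum_def f_def by auto
  have fib: "card {p \<in> H \<times> K. f p = x} = card (H \<inter> K)" if xin: "x \<in> z2sum H K" for x
  proof -
    obtain h0 k0 where hk: "h0 \<in> H" "k0 \<in> K" "x = z2add h0 k0"
      using xin unfolding z2sum_def by blast
    define g where "g = (\<lambda>t. (z2add h0 t, z2add k0 t))"
    have "{p \<in> H \<times> K. f p = x} = g ` (H \<inter> K)"
    proof
      show "{p \<in> H \<times> K. f p = x} \<subseteq> g ` (H \<inter> K)"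
      proof
        fix p assume p: "p \<in> {p \<in> H \<times> K. f p = x}"
        obtain h k where pk: "p = (h,k)" by fastforce
        with p have "h \<in> H" "k \<in> K" "z2add h k = z2add h0 k0" using hk unfolding f_def by auto
        define t where "t = z2add h0 h"
        have "t = z2add k0 k" using z2_eq_swap[OF \<open>z2add h k = z2add h0 k0\<close>] unfolding t_def .
        have "t \<in> H" using H(1) hk(1) \<open>h \<in> H\<close> unfolding t_def subsp_def by blast
        moreover have "t \<in> K" using K(1) hk(2) \<open>k \<in> K\<close> \<open>t = z2add k0 k\<close> unfolding subsp_def by blast
        moreover have "p = g t"
        proof -
          have "z2add h0 t = h" unfolding t_def by simp
          moreover have "z2add k0 t = k" unfolding \<open>t = z2add k0 k\<close> by simp
          ultimately show ?thesis unfolding g_def pk by simp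
        qed
        ultimately show "p \<in> g ` (H \<inter> K)" by blast
      qed
    next
      show "g ` (H \<inter> K) \<subseteq> {p \<in> H \<times> K. f p = x}"
      proof
        fix p assume "p \<in> g ` (H \<inter> K)"
        then obtain t where t: "t \<in> H" "t \<in> K" "p = g t" by blast
        have "z2add h0 t \<in> H" "z2add k0 t \<in> K" using t hk H(1) K(1) unfolding subsp_def by blast+
        then show "p \<in> {p \<in> H \<times> K. f p = x}"
          using t hk z2_shift unfolding g_def f_def by auto
      qed
    qed
    moreover have "inj_on g (H \<inter> K)" unfolding g_def inj_on_def
      by (metis fst_conv z2add_cancel)
    ultimately show ?thesis by (simp add: card_image)
  qed
  have "sum (\<lambda>p. card {x \<in> z2sum H K. f p = x}) (H \<times> K) = card (H \<inter> K) * card (z2sum H K)"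
    by (rule sum_multicount) (use H K fib sum_finite in auto)
  moreover have "sum (\<lambda>p. card {x \<in> z2sum H K. f p = x}) (H \<times> K) = card (H \<times> K)"
  proof -
    have "\<And>p. p \<in> H \<times> K \<Longrightarrow> {x \<in> z2sum H K. f p = x} = {f p}" using T by auto
    then show ?thesis by simp
  qed
  ultimately show ?thesis by (metis card_cartesian_product mult.commute)
qed

lemma grassmann:
  assumes H: "subsp H" "finite H" and K: "subsp K" "finite K"
  shows "z2dim (z2sum H K) + z2dim (H \<inter> K) = z2dim H + z2dim K"
proof -
  have "(2::nat) ^ (z2dim (z2sum H K) + z2dim (H \<inter> K)) = 2 ^ (z2dim H + z2dim K)"
    using product_formula[OF assms] D_card subsp_sum subsp_int sum_finite H K
    by (simp add: power_add)
  then show ?thesis by simp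
qed




lemma Gconn_transfer:
  assumes "\<forall>i j. Gedge d1 n r1 i j \<longrightarrow> Gedge d2 n r2 i j" "Gconn d1 n r1 i j"
  shows "Gconn d2 n r2 i j"
proof -
  have "Gedge d1 n r1 \<le> Gedge d2 n r2" using assms(1) by blast
  then have "(Gedge d1 n r1)\<^sup>*\<^sup>* \<le> (Gedge d2 n r2)\<^sup>*\<^sup>*" by (rule rtranclp_mono)
  then show ?thesis using assms(2) unfolding Gconn_def by blast
qed

lemma Gconn_mono: "r \<le> s \<Longrightarrow> Gconn d n r i j \<Longrightarrow> Gconn d n s i j"
  by (rule Gconn_transfer[of d n r]) (auto simp: Gedge_def)

lemma subsp_Pow: "subsp (Pow A)"
  unfolding subsp_def z2add_def by auto

lemma ker_plus_subsp: "subsp (ker_plus d n b)"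
  unfolding ker_plus_def by (rule span_subsp)

lemma subsp_single: "subsp {{}}"
  unfolding subsp_def by simp

lemma ker_minus_subsp: "subsp (ker_minus d n b)"
  unfolding ker_minus_def by (simp add: span_subsp subsp_single)

lemma ker_plus_Pow: "ker_plus d n b \<subseteq> Pow {..<n}"
  unfolding ker_plus_def
  by (rule span_least[OF _ subsp_Pow]) (auto simp: Gconn_def z2add_def)

lemma ker_minus_sub: "ker_minus d n b \<subseteq> ker_plus d n b"
proof (cases "b = 0")
  case True then show ?thesis
    unfolding ker_minus_def ker_plus_def using z2span.zero by simp
next
  case False
  have "{z2add {i} {j} | i j. \<exists>r. 0 \<le> r \<and> r < b \<and> Gconn d n r i j}
        \<subseteq> {z2add {i} {j} | i j. Gconn d n b i j}"
  proof
    fix x assume "x \<in> {z2add {i} {j} | i j. \<exists>r. 0 \<le> r \<and> r < b \<and> Gconn d n r i j}"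
    then obtain i j r where x: "x = z2add {i} {j}" "r < b" "Gconn d n r i j" by blast
    then have "Gconn d n b i j" using Gconn_mono[of r b] by simp
    then show "x \<in> {z2add {i} {j} | i j. Gconn d n b i j}" using x by blast
  qed
  then have "z2span {z2add {i} {j} | i j. \<exists>r. 0 \<le> r \<and> r < b \<and> Gconn d n r i j}
        \<subseteq> z2span {z2add {i} {j} | i j. Gconn d n b i j}" by (rule span_mono)
  then show ?thesis using False unfolding ker_minus_def ker_plus_def by simp
qed

lemma ker_plus_finite: "finite (ker_plus d n b)"
  by (rule finite_subset[OF ker_plus_Pow]) simp

lemma ker_minus_finite: "finite (ker_minus d n b)"
  by (rule finite_subset[OF ker_minus_sub ker_plus_finite])

lemma ker_plus_reduce:
  assumes "\<forall>i<n. \<forall>j<n. i \<noteq> j \<longrightarrow> d i j \<le> r \<longrightarrow> d i j \<le> s"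
  shows "{z2add {i} {j} | i j. Gconn d n r i j} \<subseteq> {z2add {i} {j} | i j. Gconn d n s i j}"
proof -
  have "Gconn d n r i j \<Longrightarrow> Gconn d n s i j" for i j
    by (rule Gconn_transfer[of d n r]) (use assms in \<open>auto simp: Gedge_def\<close>)
  then show ?thesis by blast
qed

lemma ker_minus_eq:
  fixes T :: "real set"
  assumes T: "finite T" "0 \<in> T" "\<forall>i<n. \<forall>j<n. d i j \<in> T" and b: "b > 0"
  shows "ker_minus d n b = ker_plus d n (Max {t\<in>T. t < b})"
proof -
  define s where "s = Max {t\<in>T. t < b}"
  have fin: "finite {t\<in>T. t < b}" using T by simp
  have sin: "s \<in> {t\<in>T. t < b}" unfolding s_def using fin T b by (intro Max_in) auto
  have s0: "0 \<le> s" unfolding s_def using fin T b by (intro Max_ge) auto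
  have "{z2add {i} {j} | i j. \<exists>r. 0 \<le> r \<and> r < b \<and> Gconn d n r i j}
      = {z2add {i} {j} | i j. Gconn d n s i j}"
  proof
    show "{z2add {i} {j} | i j. Gconn d n s i j}
       \<subseteq> {z2add {i} {j} | i j. \<exists>r. 0 \<le> r \<and> r < b \<and> Gconn d n r i j}"
      using sin s0 by blast
  next
    have "Gconn d n s i j" if "0 \<le> r" "r < b" "Gconn d n r i j" for r i j
    proof (rule Gconn_transfer[OF _ that(3)], intro allI impI)
      fix i' j' assume e: "Gedge d n r i' j'"
      then have "d i' j' \<in> {t\<in>T. t < b}" using T that unfolding Gedge_def by auto
      then have "d i' j' \<le> s" unfolding s_def using fin by simp
      then show "Gedge d n s i' j'" using e unfolding Gedge_def by auto
    qed
    then show "{z2add {i} {j} | i j. \<exists>r. 0 \<le> r \<and> r < b \<and> Gconn d n r i j}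
       \<subseteq> {z2add {i} {j} | i j. Gconn d n s i j}" by blast
  qed
  then show ?thesis using b unfolding ker_minus_def ker_plus_def s_def by simp
qed

lemma ker_plus_eq_nonT:
  fixes T :: "real set"
  assumes T: "finite T" "0 \<in> T" "\<forall>i<n. \<forall>j<n. d i j \<in> T" and a: "a \<ge> 0" "a \<notin> T"
  shows "ker_minus d n a = ker_plus d n a"
proof -
  have a0: "a > 0" using a T by (cases "a = 0") auto
  define s where "s = Max {t\<in>T. t < a}"
  have fin: "finite {t\<in>T. t < a}" using T by simp
  have "ker_plus d n a \<subseteq> ker_plus d n s"
    unfolding ker_plus_def
  proof (rule span_mono, rule ker_plus_reduce, intro allI impI)
    fix i j assume "i < n" "j < n" "i \<noteq> j" "d i j \<le> a"
    then have "d i j \<in> {t\<in>T. t < a}" using T a by (auto simp: order_le_less)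
    then show "d i j \<le> s" unfolding s_def using fin by simp
  qed
  also have "\<dots> = ker_minus d n a" using ker_minus_eq[OF T a0] s_def by simp
  finally show ?thesis using ker_minus_sub by blast
qed




lemma block_zero:
  assumes "ker_plus dX n a \<inter> ker_plus dZ n b \<subseteq> ker_minus dX n a \<or>
           ker_plus dX n a \<inter> ker_plus dZ n b \<subseteq> ker_minus dZ n b"
  shows "block_fun dX dZ n a b = 0"
proof -
  define A where "A = ker_plus dX n a \<inter> ker_plus dZ n b"
  define H where "H = ker_minus dX n a \<inter> ker_plus dZ n b"
  define K where "K = ker_plus dX n a \<inter> ker_minus dZ n b"
  have sA: "subsp A" unfolding A_def by (intro subsp_int ker_plus_subsp)
  have sH: "subsp H" unfolding H_def by (intro subsp_int ker_plus_subsp ker_minus_subsp)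
  have sK: "subsp K" unfolding K_def by (intro subsp_int ker_plus_subsp ker_minus_subsp)
  have HA: "H \<subseteq> A" unfolding H_def A_def using ker_minus_sub by blast
  have KA: "K \<subseteq> A" unfolding K_def A_def using ker_minus_sub by blast
  have "z2sum H K \<subseteq> A" by (rule sum_least[OF HA KA sA])
  moreover have "A \<subseteq> z2sum H K"
  proof (cases "A \<subseteq> ker_minus dX n a")
    case True
    then have "A \<subseteq> H" unfolding A_def H_def by blast
    also have "H \<subseteq> z2sum H K" by (rule sum_left) (use sK in \<open>simp add: subsp_def\<close>)
    finally show ?thesis .
  next
    case False
    then have "A \<subseteq> K" using assms unfolding A_def K_def by blast
    also have "K \<subseteq> z2sum H K" by (rule sum_right) (use sH in \<open>simp add: subsp_def\<close>)
    finally show ?thesis .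
  qed
  ultimately have "z2sum H K = A" by (rule subset_antisym)
  then show ?thesis unfolding block_fun_def z2quotdim_def A_def H_def K_def by simp
qed

lemma block_formula:
  "int (block_fun dX dZ n a b) =
     int (z2dim (ker_plus dX n a \<inter> ker_plus dZ n b))
   - int (z2dim (ker_minus dX n a \<inter> ker_plus dZ n b))
   - int (z2dim (ker_plus dX n a \<inter> ker_minus dZ n b))
   + int (z2dim (ker_minus dX n a \<inter> ker_minus dZ n b))"
proof -
  define A where "A = ker_plus dX n a \<inter> ker_plus dZ n b"
  define H where "H = ker_minus dX n a \<inter> ker_plus dZ n b"
  define K where "K = ker_plus dX n a \<inter> ker_minus dZ n b"
  have sA: "subsp A" unfolding A_def by (intro subsp_int ker_plus_subsp)
  have sH: "subsp H" unfolding H_def by (intro subsp_int ker_plus_subsp ker_minus_subsp)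
  have sK: "subsp K" unfolding K_def by (intro subsp_int ker_plus_subsp ker_minus_subsp)
  have fA: "finite A" unfolding A_def using ker_plus_finite by blast
  have fH: "finite H" unfolding H_def using ker_plus_finite by blast
  have fK: "finite K" unfolding K_def using ker_plus_finite by blast
  have HA: "H \<subseteq> A" unfolding H_def A_def using ker_minus_sub by blast
  have KA: "K \<subseteq> A" unfolding K_def A_def using ker_minus_sub by blast
  have WA: "z2sum H K \<subseteq> A" by (rule sum_least[OF HA KA sA])
  have HK: "H \<inter> K = ker_minus dX n a \<inter> ker_minus dZ n b"
    unfolding H_def K_def using ker_minus_sub by blast
  have g: "z2dim (z2sum H K) + z2dim (H \<inter> K) = z2dim H + z2dim K"
    by (rule grassmann[OF sH fH sK fK])
  have m: "z2dim (z2sum H K) \<le> z2dim A"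
    by (rule D_mono[OF subsp_sum[OF sH sK] sA WA fA])
  have "block_fun dX dZ n a b = z2dim A - z2dim (z2sum H K)"
    unfolding block_fun_def z2quotdim_def A_def H_def K_def by simp
  then show ?thesis using g m HK unfolding A_def H_def K_def by simp
qed

lemma card_z2add:
  assumes "finite A" "finite B"
  shows "card (z2add A B) + 2 * card (A \<inter> B) = card A + card B"
proof -
  have d: "z2add A B = (A - B) \<union> (B - A)" unfolding z2add_def by simp
  have "card ((A - B) \<union> (B - A)) = card (A - B) + card (B - A)"
    by (rule card_Un_disjoint) (use assms in auto)
  moreover have "card (A - B) = card A - card (A \<inter> B)"
    using assms by (simp add: card_Diff_subset_Int)
  moreover have "card (B - A) = card B - card (A \<inter> B)"
    using assms by (metis card_Diff_subset_Int finite_Int inf_commute)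
  moreover have "card (A \<inter> B) \<le> card A" "card (A \<inter> B) \<le> card B"
    using assms by (simp_all add: card_mono)
  ultimately show ?thesis using d by simp
qed

lemma ker_plus_even: "x \<in> ker_plus d n b \<Longrightarrow> finite x \<and> even (card x)"
  unfolding ker_plus_def
proof (induction x rule: z2span.induct)
  case zero then show ?case by simp
next
  case (add s v)
  then obtain i j where s: "s = z2add {i} {j}" by blast
  have fs: "finite s" "even (card s)"
    unfolding s z2add_def by (cases "i = j"; simp)+
  have "card (z2add s v) + 2 * card (s \<inter> v) = card s + card v"
    using card_z2add fs add.IH by blast
  then have "even (card (z2add s v))" using fs add.IH
    by (metis dvd_add_left_iff dvd_triv_left even_add)
  moreover have "finite (z2add s v)" using fs add.IH unfolding z2add_def by simp
  ultimately show ?case by simp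
qed

lemma dim_bound:
  assumes "n \<ge> 1"
  shows "z2dim (ker_plus dX n a \<inter> ker_plus dZ n b) \<le> n - 1"
proof -
  define V where "V = ker_plus dX n a \<inter> ker_plus dZ n b"
  have sV: "subsp V" unfolding V_def by (intro subsp_int ker_plus_subsp)
  have VP: "V \<subseteq> Pow {..<n}" unfolding V_def using ker_plus_Pow by blast
  have fV: "finite V" using VP finite_subset by (metis finite_Pow_iff finite_lessThan)
  have notin: "{0} \<notin> V" unfolding V_def using ker_plus_even[of "{0}" dX n a] by auto
  have disj: "V \<inter> z2add {0} ` V = {}"
  proof (rule ccontr)
    assume "V \<inter> z2add {0} ` V \<noteq> {}"
    then obtain v w where vw: "v \<in> V" "w \<in> V" "v = z2add {0} w" by blast
    then have "z2add v w = {0}" by (simp add: z2add_assoc)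
    then show False using sV vw notin unfolding subsp_def by metis
  qed
  have inj: "inj_on (z2add {0}) V" by (metis inj_onI z2add_cancel)
  have sub: "V \<union> z2add {0} ` V \<subseteq> Pow {..<n}"
    using VP assms unfolding z2add_def by auto
  have "card V + card V = card (V \<union> z2add {0} ` V)"
    using card_Un_disjoint[OF fV finite_imageI[OF fV] disj] card_image[OF inj] by simp
  also have "\<dots> \<le> card (Pow {..<n::nat})" by (rule card_mono) (use sub in auto)
  also have "\<dots> = 2 ^ n" by (simp add: card_Pow)
  finally have "2 * 2 ^ z2dim V \<le> (2::nat) ^ n" using D_card[OF sV fV] by simp
  then have "2 ^ Suc (z2dim V) \<le> (2::nat) ^ n" by simp
  then have "Suc (z2dim V) \<le> n" by (simp only: power_increasing_iff)
  then show ?thesis unfolding V_def by simp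
qed

lemma telescope:
  fixes T :: "real set" and u v :: "real \<Rightarrow> int"
  assumes "finite T" "T \<noteq> {}" "v (Min T) = c0"
    "\<forall>t\<in>T. t \<noteq> Min T \<longrightarrow> v t = u (Max {s\<in>T. s < t})"
  shows "(\<Sum>t\<in>T. u t - v t) = u (Max T) - c0"
  using assms
proof (induction T rule: finite_linorder_max_induct)
  case empty then show ?case by simp
next
  case (insert b A)
  show ?case
  proof (cases "A = {}")
    case True
    then show ?thesis using insert.prems by simp
  next
    case False
    have minA: "Min (insert b A) = Min A"
      using False insert.hyps by (metis Min_insert Min_in less_imp_le min_absorb2 not_less)
    have maxI: "Max (insert b A) = b"
      by (rule Max_eqI) (use insert.hyps in \<open>auto simp: less_imp_le\<close>)
    have sub: "\<And>t. t \<in> A \<Longrightarrow> {s \<in> insert b A. s < t} = {s\<in>A. s < t}"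
      using insert.hyps by auto
    have IH: "(\<Sum>t\<in>A. u t - v t) = u (Max A) - c0"
      using insert.IH False insert.prems minA sub by (metis insertCI)
    have bnm: "b \<noteq> Min (insert b A)" using minA False insert.hyps
      by (metis Min_in less_irrefl)
    have "{s \<in> insert b A. s < b} = A" using insert.hyps by auto
    then have vb: "v b = u (Max A)" using insert.prems bnm by auto
    have "b \<notin> A" using insert.hyps by auto
    then show ?thesis using IH vb maxI insert.hyps by simp
  qed
qed




lemma D_single: "z2dim {{}} = 0"
  by (rule D_eq) simp

lemma cross_sub:
  assumes "\<forall>i<n. \<forall>j<n. dZ i j < dX i j + e" "0 \<le> a" "a + e \<le> b" "e > 0"
  shows "ker_plus dX n a \<subseteq> ker_minus dZ n b"
proof -
  define R where "R = insert 0 {dZ i j | i j. i < n \<and> j < n \<and> i \<noteq> j \<and> dX i j \<le> a}"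
  define r where "r = Max R"
  have "{dZ i j | i j. i < n \<and> j < n \<and> i \<noteq> j \<and> dX i j \<le> a}
        \<subseteq> (\<lambda>(i,j). dZ i j) ` ({..<n} \<times> {..<n})" by auto
  then have "finite {dZ i j | i j. i < n \<and> j < n \<and> i \<noteq> j \<and> dX i j \<le> a}"
    by (rule finite_subset) simp
  then have fR: "finite R" unfolding R_def by simp
  have b0: "b > 0" using assms by simp
  have r0: "0 \<le> r" unfolding r_def R_def using fR R_def by (intro Max_ge) auto
  have rb: "r < b" unfolding r_def
  proof (subst Max_less_iff)
    show "finite R" by (rule fR)
    show "R \<noteq> {}" unfolding R_def by simp
    show "\<forall>x\<in>R. x < b"
    proof
      fix x assume "x \<in> R"
      then show "x < b"
      proof (cases "x = 0")
        case True then show ?thesis using b0 by simp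
      next
        case False
        then obtain i j where "i < n" "j < n" "dX i j \<le> a" "x = dZ i j"
          using \<open>x \<in> R\<close> unfolding R_def by blast
        then show ?thesis using assms(1,3) by fastforce
      qed
    qed
  qed
  have gen: "{z2add {i} {j} | i j. Gconn dX n a i j}
     \<subseteq> {z2add {i} {j} | i j. \<exists>r. 0 \<le> r \<and> r < b \<and> Gconn dZ n r i j}"
  proof
    fix x assume "x \<in> {z2add {i} {j} | i j. Gconn dX n a i j}"
    then obtain i j where x: "x = z2add {i} {j}" "Gconn dX n a i j" by blast
    have "Gconn dZ n r i j"
    proof (rule Gconn_transfer[OF _ x(2)], intro allI impI)
      fix i' j' assume e: "Gedge dX n a i' j'"
      then have "dZ i' j' \<in> R" unfolding R_def Gedge_def by blast
      then have "dZ i' j' \<le> r" unfolding r_def using fR by simp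
      then show "Gedge dZ n r i' j'" using e unfolding Gedge_def by simp
    qed
    then show "x \<in> {z2add {i} {j} | i j. \<exists>r. 0 \<le> r \<and> r < b \<and> Gconn dZ n r i j}"
      using x r0 rb by blast
  qed
  have "ker_plus dX n a \<subseteq> z2span {z2add {i} {j} | i j. \<exists>r. 0 \<le> r \<and> r < b \<and> Gconn dZ n r i j}"
    unfolding ker_plus_def by (rule span_mono[OF gen])
  then show ?thesis unfolding ker_minus_def using b0 by simp
qed

lemma T_props:
  fixes d :: "nat \<Rightarrow> nat \<Rightarrow> real"
  assumes "\<forall>i<n. \<forall>j<n. 0 \<le> d i j"
  defines "T \<equiv> insert 0 {d i j | i j. i < n \<and> j < n}"
  shows "finite T" "0 \<in> T" "\<forall>i<n. \<forall>j<n. d i j \<in> T" "\<forall>t\<in>T. 0 \<le> t" "Min T = 0" "T \<noteq> {}"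
proof -
  have "{d i j | i j. i < n \<and> j < n} = (\<lambda>(i,j). d i j) ` ({..<n} \<times> {..<n})" by auto
  then show fT: "finite T" unfolding T_def by simp
  show "0 \<in> T" "\<forall>i<n. \<forall>j<n. d i j \<in> T" "T \<noteq> {}" unfolding T_def by auto
  show nn: "\<forall>t\<in>T. 0 \<le> t" unfolding T_def using assms(1) by auto
  show "Min T = 0" by (rule Min_eqI) (use fT nn in \<open>auto simp: T_def\<close>)
qed

lemma empty_in_plus: "{} \<in> ker_plus d n b"
  unfolding ker_plus_def by (rule z2span.zero)
lemma empty_in_minus: "{} \<in> ker_minus d n b"
  using ker_minus_subsp unfolding subsp_def by blast

lemma km0: "ker_minus d n 0 = {{}}"
  unfolding ker_minus_def by simp

theorem theorem1:
  fixes n q :: nat and dX dZ :: "nat \<Rightarrow> nat \<Rightarrow> real" and \<epsilon> :: real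
  assumes "n \<ge> 1"
    and "\<forall>i<n. \<forall>j<n. dX i j = dX j i \<and> 0 \<le> dX i j"
    and "\<forall>i<n. \<forall>j<n. dZ i j = dZ j i \<and> 0 \<le> dZ i j"
    and "\<epsilon> > 0"
    and "\<forall>i<n. \<forall>j<n. \<bar>dX i j - dZ i j\<bar> < \<epsilon>"
    and "q \<ge> 1"
  shows "induced_matching_dist q dX dZ n \<le> real (n - 1) powr (1 / real q) * \<epsilon>"
proof -
  define TX where "TX = insert 0 {dX i j | i j. i < n \<and> j < n}"
  define TZ where "TZ = insert 0 {dZ i j | i j. i < n \<and> j < n}"
  have nnX: "\<forall>i<n. \<forall>j<n. 0 \<le> dX i j" using assms(2) by blast
  have nnZ: "\<forall>i<n. \<forall>j<n. 0 \<le> dZ i j" using assms(3) by blast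
  note TXp = T_props[OF nnX, folded TX_def]
  note TZp = T_props[OF nnZ, folded TZ_def]
  have XZ: "\<forall>i<n. \<forall>j<n. dZ i j < dX i j + \<epsilon>"
  proof (intro allI impI)
    fix i j assume "i < n" "j < n"
    then have "\<bar>dX i j - dZ i j\<bar> < \<epsilon>" using assms(5) by blast
    then show "dZ i j < dX i j + \<epsilon>" by linarith
  qed
  have ZX: "\<forall>i<n. \<forall>j<n. dX i j < dZ i j + \<epsilon>"
  proof (intro allI impI)
    fix i j assume "i < n" "j < n"
    then have "\<bar>dX i j - dZ i j\<bar> < \<epsilon>" using assms(5) by blast
    then show "dX i j < dZ i j + \<epsilon>" by linarith
  qed
  have supp: "a \<in> TX \<and> b \<in> TZ \<and> \<bar>a - b\<bar> < \<epsilon>"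
    if ab: "0 \<le> a" "0 \<le> b" "block_fun dX dZ n a b \<noteq> 0" for a b
  proof (intro conjI)
    show "a \<in> TX"
    proof (rule ccontr)
      assume "a \<notin> TX"
      then have "ker_minus dX n a = ker_plus dX n a"
        using ker_plus_eq_nonT[OF TXp(1-3) ab(1)] by blast
      then have "block_fun dX dZ n a b = 0" by (intro block_zero) blast
      then show False using ab by simp
    qed
    show "b \<in> TZ"
    proof (rule ccontr)
      assume "b \<notin> TZ"
      then have "ker_minus dZ n b = ker_plus dZ n b"
        using ker_plus_eq_nonT[OF TZp(1-3) ab(2)] by blast
      then have "block_fun dX dZ n a b = 0" by (intro block_zero) blast
      then show False using ab by simp
    qed
    show "\<bar>a - b\<bar> < \<epsilon>"
    proof (rule ccontr)
      assume "\<not> \<bar>a - b\<bar> < \<epsilon>"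
      then have "a + \<epsilon> \<le> b \<or> b + \<epsilon> \<le> a" by (auto simp: abs_if split: if_splits)
      then have "block_fun dX dZ n a b = 0"
      proof
        assume "a + \<epsilon> \<le> b"
        then have "ker_plus dX n a \<subseteq> ker_minus dZ n b" by (rule cross_sub[OF XZ ab(1) _ assms(4)])
        then show ?thesis by (intro block_zero) blast
      next
        assume "b + \<epsilon> \<le> a"
        then have "ker_plus dZ n b \<subseteq> ker_minus dX n a" by (rule cross_sub[OF ZX ab(2) _ assms(4)])
        then show ?thesis by (intro block_zero) blast
      qed
      then show False using ab by simp
    qed
  qed
  define am where "am = Max TX"
  define bm where "bm = Max TZ"
  have inner: "(\<Sum>b\<in>TZ. int (block_fun dX dZ n a b)) =
      int (z2dim (ker_plus dX n a \<inter> ker_plus dZ n bm)) - int (z2dim (ker_minus dX n a \<inter> ker_plus dZ n bm))"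
    for a
  proof -
    define u where "u = (\<lambda>b. int (z2dim (ker_plus dX n a \<inter> ker_plus dZ n b)) - int (z2dim (ker_minus dX n a \<inter> ker_plus dZ n b)))"
    define v where "v = (\<lambda>b. int (z2dim (ker_plus dX n a \<inter> ker_minus dZ n b)) - int (z2dim (ker_minus dX n a \<inter> ker_minus dZ n b)))"
    have "(\<Sum>b\<in>TZ. int (block_fun dX dZ n a b)) = (\<Sum>b\<in>TZ. u b - v b)"
      by (rule sum.cong) (simp_all add: block_formula u_def v_def)
    also have "\<dots> = u (Max TZ) - 0"
    proof (rule telescope[OF TZp(1) TZp(6)])
      have "ker_plus dX n a \<inter> {{}} = {{}}" "ker_minus dX n a \<inter> {{}} = {{}}"
        using empty_in_plus empty_in_minus by blast+
      then show "v (Min TZ) = 0" unfolding v_def TZp(5) km0 by (simp add: D_single)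
      show "\<forall>t\<in>TZ. t \<noteq> Min TZ \<longrightarrow> v t = u (Max {s \<in> TZ. s < t})"
      proof (intro ballI impI)
        fix t assume "t \<in> TZ" "t \<noteq> Min TZ"
        then have "t > 0" using TZp(4,5) by force
        then show "v t = u (Max {s \<in> TZ. s < t})"
          unfolding u_def v_def using ker_minus_eq[OF TZp(1-3)] by simp
      qed
    qed
    finally show ?thesis unfolding u_def bm_def by simp
  qed
  have outer: "(\<Sum>a\<in>TX. \<Sum>b\<in>TZ. int (block_fun dX dZ n a b)) =
      int (z2dim (ker_plus dX n am \<inter> ker_plus dZ n bm))"
  proof -
    define u where "u = (\<lambda>a. int (z2dim (ker_plus dX n a \<inter> ker_plus dZ n bm)))"
    define v where "v = (\<lambda>a. int (z2dim (ker_minus dX n a \<inter> ker_plus dZ n bm)))"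
    have "(\<Sum>a\<in>TX. \<Sum>b\<in>TZ. int (block_fun dX dZ n a b)) = (\<Sum>a\<in>TX. u a - v a)"
      by (rule sum.cong) (simp_all add: inner u_def v_def)
    also have "\<dots> = u (Max TX) - 0"
    proof (rule telescope[OF TXp(1) TXp(6)])
      have "{{}} \<inter> ker_plus dZ n bm = {{}}"
        using empty_in_plus by blast
      then show "v (Min TX) = 0" unfolding v_def TXp(5) km0 by (simp add: D_single)
      show "\<forall>t\<in>TX. t \<noteq> Min TX \<longrightarrow> v t = u (Max {s \<in> TX. s < t})"
      proof (intro ballI impI)
        fix t assume "t \<in> TX" "t \<noteq> Min TX"
        then have "t > 0" using TXp(4,5) by force
        then show "v t = u (Max {s \<in> TX. s < t})"
          unfolding u_def v_def using ker_minus_eq[OF TXp(1-3)] by simp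
      qed
    qed
    finally show ?thesis unfolding u_def am_def by simp
  qed
  have natsum: "(\<Sum>a\<in>TX. \<Sum>b\<in>TZ. block_fun dX dZ n a b) \<le> n - 1"
  proof -
    have "int (\<Sum>a\<in>TX. \<Sum>b\<in>TZ. block_fun dX dZ n a b) = int (z2dim (ker_plus dX n am \<inter> ker_plus dZ n bm))"
      using outer by (simp add: of_nat_sum)
    then have "(\<Sum>a\<in>TX. \<Sum>b\<in>TZ. block_fun dX dZ n a b) = z2dim (ker_plus dX n am \<inter> ker_plus dZ n bm)"
      by (simp only: of_nat_eq_iff)
    then show ?thesis using dim_bound[OF assms(1), of dX am dZ bm] by simp
  qed
  define S where "S = {(a, b). 0 \<le> a \<and> 0 \<le> b \<and> block_fun dX dZ n a b \<noteq> 0}"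
  have SX: "S \<subseteq> TX \<times> TZ" unfolding S_def using supp by auto
  have fS: "finite S" using finite_subset[OF SX] TXp(1) TZp(1) by blast
  define Q where "Q = (\<Sum>(a, b)\<in>S. real (block_fun dX dZ n a b) * \<bar>a - b\<bar> ^ q)"
  have Q0: "0 \<le> Q" unfolding Q_def by (intro sum_nonneg) auto
  have "Q \<le> (\<Sum>(a, b)\<in>S. real (block_fun dX dZ n a b) * \<epsilon> ^ q)"
    unfolding Q_def
  proof (rule sum_mono)
    fix p assume "p \<in> S"
    then obtain a b where p: "p = (a, b)" "0 \<le> a" "0 \<le> b" "block_fun dX dZ n a b \<noteq> 0"
      unfolding S_def by blast
    then have "\<bar>a - b\<bar> < \<epsilon>" using supp by blast
    then have "\<bar>a - b\<bar> ^ q \<le> \<epsilon> ^ q" by (intro power_mono) auto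
    then show "(case p of (a, b) \<Rightarrow> real (block_fun dX dZ n a b) * \<bar>a - b\<bar> ^ q)
       \<le> (case p of (a, b) \<Rightarrow> real (block_fun dX dZ n a b) * \<epsilon> ^ q)"
      unfolding p by (simp add: mult_left_mono)
  qed
  also have "\<dots> = (\<Sum>(a, b)\<in>TX \<times> TZ. real (block_fun dX dZ n a b) * \<epsilon> ^ q)"
  proof (rule sum.mono_neutral_left)
    show "finite (TX \<times> TZ)" using TXp(1) TZp(1) by simp
    show "S \<subseteq> TX \<times> TZ" by (rule SX)
    show "\<forall>i\<in>TX \<times> TZ - S. (case i of (a, b) \<Rightarrow> real (block_fun dX dZ n a b) * \<epsilon> ^ q) = 0"
      using TXp(4) TZp(4) unfolding S_def by auto
  qed
  also have "\<dots> = (\<Sum>a\<in>TX. \<Sum>b\<in>TZ. real (block_fun dX dZ n a b) * \<epsilon> ^ q)"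
    by (rule sum.cartesian_product[symmetric])
  also have "\<dots> = real (\<Sum>a\<in>TX. \<Sum>b\<in>TZ. block_fun dX dZ n a b) * \<epsilon> ^ q"
    by (simp add: sum_distrib_right)
  also have "\<dots> \<le> real (n - 1) * \<epsilon> ^ q"
  proof (rule mult_right_mono)
    show "real (\<Sum>a\<in>TX. \<Sum>b\<in>TZ. block_fun dX dZ n a b) \<le> real (n - 1)"
      using natsum by (simp only: of_nat_le_iff)
    show "0 \<le> \<epsilon> ^ q" using assms(4) by simp
  qed
  finally have Qle: "Q \<le> real (n - 1) * \<epsilon> ^ q" .
  have "induced_matching_dist q dX dZ n = Q powr (1 / real q)"
    unfolding induced_matching_dist_def Q_def S_def by simp
  also have "\<dots> \<le> (real (n - 1) * \<epsilon> ^ q) powr (1 / real q)"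
    by (rule powr_mono2) (use Q0 Qle in auto)
  also have "\<dots> = real (n - 1) powr (1 / real q) * (\<epsilon> ^ q) powr (1 / real q)"
    using assms(4) by (simp add: powr_mult)
  also have "(\<epsilon> ^ q) powr (1 / real q) = \<epsilon>"
  proof -
    have "(\<epsilon> ^ q) powr (1 / real q) = (\<epsilon> powr real q) powr (1 / real q)"
      using assms(4) by (simp add: powr_realpow)
    also have "\<dots> = \<epsilon> powr (real q * (1 / real q))" by (simp add: powr_powr)
    also have "\<dots> = \<epsilon>" using assms(4,6) by simp
    finally show ?thesis .
  qed
  finally show ?thesis .
qed


end
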